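(* Let $G$ be a locally compact group and $\mathcal K$ a class of finite algebras. Then $G$ is approximable by systems of $\mathcal K$ in the group sense (Definition B below) if and only if it is approximable by systems of $\mathcal K$ in the general sense (Definition A below).
   Context: An algebra is a set with one binary operation; $(H,\odot)$ denotes a finite algebra. Definition A (general): for a compact $C\subseteq G$ and a finite cover $\mathcal U$ of $C$ by open sets, $j:H\to G$ gives a $(C,\mathcal U)$-approximation if every $U\in\mathcal U$ with $U\cap C\neq\emptyset$ contains a point of $j(H)$, and for all $x,y\in H$ with $j(x),j(y),j(x)j(y)\in C$ there is $U\in\mathcal U$ with $j(x\odot y)\in U$ and $j(x)j(y)\in U$; $G$ is approximable by $\mathcal K$ if for all such $C,\mathcal U$ there is a $(C,\mathcal U)$-approximation $(H,j)$ with $H\in\mathcal K$ and $j$ injective. Definition B (group): for a compact $C\subseteq G$ and a neighborhood $U$ of the unit, $j:H\to G$ gives a $(C,U)$-approximation if $C\subseteq j(H)U$ and for all $x,y\in H$ with $j(x),j(y),j(x)j(y)\in C$ one has $j(x\odot y)\in j(x)j(y)U$; $G$ is approximable by $\mathcal K$ if for all compact $C$ and all neighborhoods $U$ of the unit there is a $(C,U)$-approximation $(H,j)$ with $H\in\mathcal K$ and $j$ injective. *)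

theory Defs
  imports "HOL-Analysis.Analysis"
begin

definition topological_group ::
  "('g::topological_space \<Rightarrow> 'g \<Rightarrow> 'g) \<Rightarrow> 'g \<Rightarrow> ('g \<Rightarrow> 'g) \<Rightarrow> bool" where
  "topological_group gmul e ginv \<longleftrightarrow>
     group gmul e ginv \<and>
     continuous_on UNIV (\<lambda>p. gmul (fst p) (snd p)) \<and>
     continuous_on UNIV ginv"

definition finite_algebra :: "'h set \<times> ('h \<Rightarrow> 'h \<Rightarrow> 'h) \<Rightarrow> bool" where
  "finite_algebra A \<longleftrightarrow> finite (fst A) \<and>
     (\<forall>x\<in>fst A. \<forall>y\<in>fst A. snd A x y \<in> fst A)"

definition general_approx ::
  "('g::topological_space \<Rightarrow> 'g \<Rightarrow> 'g) \<Rightarrow> 'g set \<Rightarrow> 'g set set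
     \<Rightarrow> 'h set \<Rightarrow> ('h \<Rightarrow> 'h \<Rightarrow> 'h) \<Rightarrow> ('h \<Rightarrow> 'g) \<Rightarrow> bool" where
  "general_approx gmul C \<U> H hop j \<longleftrightarrow>
     (\<forall>U\<in>\<U>. U \<inter> C \<noteq> {} \<longrightarrow> (\<exists>x\<in>H. j x \<in> U)) \<and>
     (\<forall>x\<in>H. \<forall>y\<in>H. j x \<in> C \<and> j y \<in> C \<and> gmul (j x) (j y) \<in> C \<longrightarrow>
        (\<exists>U\<in>\<U>. j (hop x y) \<in> U \<and> gmul (j x) (j y) \<in> U))"

definition approximable_general ::
  "('g::topological_space \<Rightarrow> 'g \<Rightarrow> 'g) \<Rightarrow> ('h set \<times> ('h \<Rightarrow> 'h \<Rightarrow> 'h)) set \<Rightarrow> bool" where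
  "approximable_general gmul \<K> \<longleftrightarrow>
     (\<forall>C \<U>. compact C \<and> finite \<U> \<and> (\<forall>U\<in>\<U>. open U) \<and> C \<subseteq> \<Union>\<U> \<longrightarrow>
        (\<exists>H hop j. (H, hop) \<in> \<K> \<and> inj_on j H \<and> general_approx gmul C \<U> H hop j))"

definition group_approx ::
  "('g \<Rightarrow> 'g \<Rightarrow> 'g) \<Rightarrow> 'g set \<Rightarrow> 'g set
     \<Rightarrow> 'h set \<Rightarrow> ('h \<Rightarrow> 'h \<Rightarrow> 'h) \<Rightarrow> ('h \<Rightarrow> 'g) \<Rightarrow> bool" where
  "group_approx gmul C U H hop j \<longleftrightarrow>
     C \<subseteq> {gmul (j x) u | x u. x \<in> H \<and> u \<in> U} \<and>
     (\<forall>x\<in>H. \<forall>y\<in>H. j x \<in> C \<and> j y \<in> C \<and> gmul (j x) (j y) \<in> C \<longrightarrow>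
        j (hop x y) \<in> {gmul (gmul (j x) (j y)) u | u. u \<in> U})"

definition approximable_group ::
  "('g::topological_space \<Rightarrow> 'g \<Rightarrow> 'g) \<Rightarrow> 'g \<Rightarrow> ('h set \<times> ('h \<Rightarrow> 'h \<Rightarrow> 'h)) set \<Rightarrow> bool" where
  "approximable_group gmul e \<K> \<longleftrightarrow>
     (\<forall>C U. compact C \<and> (\<exists>V. open V \<and> e \<in> V \<and> V \<subseteq> U) \<longrightarrow>
        (\<exists>H hop j. (H, hop) \<in> \<K> \<and> inj_on j H \<and> group_approx gmul C U H hop j))"

end

theory Submission
  imports Defs
begin

lemma box_lemma:
  fixes f :: "'a::topological_space \<times> 'b::topological_space \<Rightarrow> 'c::topological_space"
  assumes "continuous_on UNIV f" "open U" "f (a, b) \<in> U"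
  shows "\<exists>A B. open A \<and> open B \<and> a \<in> A \<and> b \<in> B \<and> (\<forall>x\<in>A. \<forall>y\<in>B. f (x, y) \<in> U)"
proof -
  have "open (f -` U)" using open_vimage[OF assms(2,1)] .
  then obtain A B where "open A" "open B" "(a,b) \<in> A \<times> B" "A \<times> B \<subseteq> f -` U"
    using open_prod_elim assms(3) by (metis vimageI2)
  then show ?thesis by blast
qed

lemma tg_facts:
  assumes "topological_group gmul e ginv"
  shows "group gmul e ginv"
    and "continuous_on UNIV (\<lambda>p. gmul (ginv (fst p)) (snd p))"
    and "continuous_on UNIV (\<lambda>v. gmul p (ginv v))"
    and "continuous_on UNIV (\<lambda>q. gmul (fst q) (snd q))"
proof -
  have m: "continuous_on UNIV (\<lambda>p. gmul (fst p) (snd p))"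
    and i: "continuous_on UNIV ginv" using assms unfolding topological_group_def by auto
  show "group gmul e ginv" using assms unfolding topological_group_def by auto
  show "continuous_on UNIV (\<lambda>q. gmul (fst q) (snd q))" using m .
  have "continuous_on UNIV (\<lambda>p. (ginv (fst p), snd p))"
    by (intro continuous_intros continuous_on_compose2[OF i]) auto
  from continuous_on_compose2[OF m this] show "continuous_on UNIV (\<lambda>p. gmul (ginv (fst p)) (snd p))"
    by simp
  have "continuous_on UNIV (\<lambda>v. (p, ginv v))"
    by (intro continuous_intros continuous_on_compose2[OF i]) auto
  from continuous_on_compose2[OF m this] show "continuous_on UNIV (\<lambda>v. gmul p (ginv v))"
    by simp
qed

theorem proposition3:
  fixes gmul :: "'g::t2_space \<Rightarrow> 'g \<Rightarrow> 'g" and e :: 'g and ginv :: "'g \<Rightarrow> 'g"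
    and \<K> :: "('h set \<times> ('h \<Rightarrow> 'h \<Rightarrow> 'h)) set"
  assumes "topological_group gmul e ginv"
    and "locally_compact_space (euclidean :: 'g topology)"
    and "\<forall>A\<in>\<K>. finite_algebra A"
  shows "approximable_group gmul e \<K> \<longleftrightarrow> approximable_general gmul \<K>"
proof
  note T = tg_facts[OF assms(1)]
  interpret G: group gmul e ginv by (rule T(1))
  show "approximable_general gmul \<K>" if B: "approximable_group gmul e \<K>"
    unfolding approximable_general_def
  proof (intro allI impI, elim conjE)
    fix C :: "'g set" and \<U> :: "'g set set" assume C: "compact C" and fin: "finite \<U>" and op: "\<forall>U\<in>\<U>. open U" and cov: "C \<subseteq> \<Union>\<U>"
    have "\<forall>c\<in>C. \<exists>A W U. open A \<and> open W \<and> c \<in> A \<and> e \<in> W \<and> U \<in> \<U> \<and> (\<forall>x\<in>A. \<forall>w\<in>W. gmul x w \<in> U)"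
    proof
      fix c assume "c \<in> C"
      then obtain U where U: "U \<in> \<U>" "c \<in> U" using cov by blast
      then have "(\<lambda>q. gmul (fst q) (snd q)) (c, e) \<in> U" by simp
      from box_lemma[OF T(4) _ this] op U obtain A W where
        AW: "open A" "open W" "c \<in> A" "e \<in> W" "\<forall>x\<in>A. \<forall>w\<in>W. gmul x w \<in> U" by auto
      show "\<exists>A W U. open A \<and> open W \<and> c \<in> A \<and> e \<in> W \<and> U \<in> \<U> \<and> (\<forall>x\<in>A. \<forall>w\<in>W. gmul x w \<in> U)"
        by (rule exI[of _ A], rule exI[of _ W], rule exI[of _ U]) (use AW U in blast)
    qed
    then obtain Af Wf Uf where AWU: "\<And>c. c \<in> C \<Longrightarrow> open (Af c) \<and> open (Wf c) \<and> c \<in> Af c \<and> e \<in> Wf c \<and> Uf c \<in> \<U> \<and> (\<forall>x\<in>Af c. \<forall>w\<in>Wf c. gmul x w \<in> Uf c)"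
      by metis
    obtain K where K: "K \<subseteq> C" "finite K" "C \<subseteq> (\<Union>c\<in>K. Af c)"
      using compactE_image[OF C, of C Af] AWU by blast
    define V1 where "V1 = (\<Inter>c\<in>K. Wf c)"
    have V1: "open V1" "e \<in> V1" unfolding V1_def using K AWU by (auto intro!: open_INT)
    have P1: "\<exists>U\<in>\<U>. \<forall>v\<in>V1. gmul c v \<in> U" if cC: "c \<in> C" for c
    proof -
      obtain k where k: "k \<in> K" "c \<in> Af k" using K cC by blast
      then have "k \<in> C" using K by blast
      then have a: "Uf k \<in> \<U>" "\<forall>x\<in>Af k. \<forall>w\<in>Wf k. gmul x w \<in> Uf k" using AWU[of k] by auto
      have "\<forall>v\<in>V1. gmul c v \<in> Uf k"
      proof
        fix v assume "v \<in> V1"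
        then have "v \<in> Wf k" using k(1) unfolding V1_def by blast
        then show "gmul c v \<in> Uf k" using a(2) k(2) by blast
      qed
      then show ?thesis using a(1) by blast
    qed
    define \<U>' where "\<U>' = {U\<in>\<U>. U \<inter> C \<noteq> {}}"
    define p where "p U = (SOME c. c \<in> U \<inter> C)" for U
    have p: "p U \<in> U \<inter> C" if "U \<in> \<U>'" for U
    proof -
      have "\<exists>c. c \<in> U \<inter> C" using that unfolding \<U>'_def by blast
      then show ?thesis unfolding p_def by (rule someI_ex)
    qed
    define V2 where "V2 = (\<Inter>U\<in>\<U>'. (\<lambda>v. gmul (p U) (ginv v)) -` U)"
    have fin': "finite \<U>'" using fin unfolding \<U>'_def by simp
    have V2: "open V2" "e \<in> V2"
    proof -
      show "open V2" unfolding V2_def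
      proof (rule open_INT[OF fin'], rule ballI)
        fix U assume "U \<in> \<U>'"
        then have "open U" using op unfolding \<U>'_def by blast
        then show "open ((\<lambda>v. gmul (p U) (ginv v)) -` U)" by (rule open_vimage[OF _ T(3)])
      qed
      show "e \<in> V2" unfolding V2_def
      proof
        fix U assume "U \<in> \<U>'"
        then have "p U \<in> U" using p by blast
        then show "e \<in> (\<lambda>v. gmul (p U) (ginv v)) -` U" by simp
      qed
    qed
    define V where "V = V1 \<inter> V2"
    have "open V" "e \<in> V" using V1 V2 unfolding V_def by auto
    then obtain H hop j where Hj: "(H, hop) \<in> \<K>" "inj_on j H" "group_approx gmul C V H hop j"
      using B unfolding approximable_group_def by (meson C order_refl)
    have "general_approx gmul C \<U> H hop j"
      unfolding general_approx_def
    proof (intro conjI ballI impI)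
      fix U assume "U \<in> \<U>" "U \<inter> C \<noteq> {}"
      then have U: "U \<in> \<U>'" unfolding \<U>'_def by simp
      then have "p U \<in> C" using p by blast
      then obtain x u where xu: "x \<in> H" "u \<in> V" "p U = gmul (j x) u"
        using Hj(3) unfolding group_approx_def by blast
      then have "gmul (p U) (ginv u) \<in> U" using U unfolding V_def V2_def by blast
      also have "gmul (p U) (ginv u) = j x" using xu(3) by (simp add: G.assoc)
      finally show "\<exists>x\<in>H. j x \<in> U" using xu(1) by blast
    next
      fix x y assume xy: "x \<in> H" "y \<in> H" "j x \<in> C \<and> j y \<in> C \<and> gmul (j x) (j y) \<in> C"
      then obtain u where u: "u \<in> V" "j (hop x y) = gmul (gmul (j x) (j y)) u"
        using Hj(3) unfolding group_approx_def by blast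
      obtain U where U: "U \<in> \<U>" "\<forall>v\<in>V1. gmul (gmul (j x) (j y)) v \<in> U"
        using P1 xy(3) by blast
      have "gmul (gmul (j x) (j y)) e \<in> U" using U V1 by blast
      then show "\<exists>U\<in>\<U>. j (hop x y) \<in> U \<and> gmul (j x) (j y) \<in> U"
        using U u unfolding V_def by auto
    qed
    then show "\<exists>H hop j. (H, hop) \<in> \<K> \<and> inj_on j H \<and> general_approx gmul C \<U> H hop j"
      using Hj by blast
  qed
next
  note T = tg_facts[OF assms(1)]
  interpret G: group gmul e ginv by (rule T(1))
  assume A: "approximable_general gmul \<K>"
  show "approximable_group gmul e \<K>"
    unfolding approximable_group_def
  proof (intro allI impI, elim conjE exE)
    fix C U V :: "'g set" assume C: "compact C" and V: "open V" "e \<in> V" "V \<subseteq> U"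
    have "\<forall>c\<in>C. \<exists>W0. open W0 \<and> c \<in> W0 \<and> (\<forall>a\<in>W0. \<forall>b\<in>W0. gmul (ginv a) b \<in> V)"
    proof
      fix c assume "c \<in> C"
      have "(\<lambda>p. gmul (ginv (fst p)) (snd p)) (c, c) \<in> V" using V by simp
      from box_lemma[OF T(2) V(1) this] obtain A B where
        "open A" "open B" "c \<in> A" "c \<in> B" "\<forall>x\<in>A. \<forall>y\<in>B. gmul (ginv x) y \<in> V" by auto
      then show "\<exists>W0. open W0 \<and> c \<in> W0 \<and> (\<forall>a\<in>W0. \<forall>b\<in>W0. gmul (ginv a) b \<in> V)"
        by (intro exI[of _ "A \<inter> B"]) auto
    qed
    then obtain Of where Of: "\<And>c. c \<in> C \<Longrightarrow> open (Of c) \<and> c \<in> Of c \<and> (\<forall>a\<in>Of c. \<forall>b\<in>Of c. gmul (ginv a) b \<in> V)"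
      by metis
    obtain K where K: "K \<subseteq> C" "finite K" "C \<subseteq> (\<Union>c\<in>K. Of c)"
      using compactE_image[OF C, of C Of] Of by blast
    have "compact C \<and> finite (Of ` K) \<and> (\<forall>U\<in>Of ` K. open U) \<and> C \<subseteq> \<Union>(Of ` K)"
    proof (intro conjI)
      show "finite (Of ` K)" using K(2) by simp
      show "\<forall>U\<in>Of ` K. open U" using K(1) Of by blast
      show "C \<subseteq> \<Union>(Of ` K)" using K(3) by simp
    qed (rule C)
    then obtain H hop j where Hj: "(H, hop) \<in> \<K>" "inj_on j H" "general_approx gmul C (Of ` K) H hop j"
      using A[unfolded approximable_general_def, rule_format, of C "Of ` K"] by blast
    have "group_approx gmul C U H hop j"
      unfolding group_approx_def
    proof (intro conjI ballI impI subsetI)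
      fix c assume c: "c \<in> C"
      then obtain k where k: "k \<in> K" "c \<in> Of k" using K by blast
      then have "Of k \<inter> C \<noteq> {}" using c by blast
      then obtain x where x: "x \<in> H" "j x \<in> Of k" using Hj(3) k unfolding general_approx_def by blast
      have "gmul (ginv (j x)) c \<in> V" using Of[of k] K k x by blast
      moreover have "c = gmul (j x) (gmul (ginv (j x)) c)" by (simp add: G.assoc[symmetric])
      ultimately show "c \<in> {gmul (j x) u |x u. x \<in> H \<and> u \<in> U}" using x V by blast
    next
      fix x y assume xy: "x \<in> H" "y \<in> H" "j x \<in> C \<and> j y \<in> C \<and> gmul (j x) (j y) \<in> C"
      then obtain k where k: "k \<in> K" "j (hop x y) \<in> Of k" "gmul (j x) (j y) \<in> Of k"
        using Hj(3) unfolding general_approx_def by blast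
      define u where "u = gmul (ginv (gmul (j x) (j y))) (j (hop x y))"
      have "u \<in> V" using Of[of k] K k unfolding u_def by blast
      moreover have "j (hop x y) = gmul (gmul (j x) (j y)) u" unfolding u_def by (simp add: G.assoc[symmetric])
      ultimately show "j (hop x y) \<in> {gmul (gmul (j x) (j y)) u |u. u \<in> U}" using V by blast
    qed
    then show "\<exists>H hop j. (H, hop) \<in> \<K> \<and> inj_on j H \<and> group_approx gmul C U H hop j"
      using Hj by blast
  qed
qed

end
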